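(* Let $X$ be a K3 surface with Picard lattice $N(X)$ and let $H\in N(X)$ be a primitive element with $H^2=8$. Then there exists $h_1\in N(X)$ with $$h_1^2=\pm 4,\qquad H\cdot h_1\equiv 0\pmod 2,\qquad H\cdot[H,h_1]_{\mathrm{pr}}=\mathbb{Z}$$ if and only if there exists $D\in N(X)$ such that the Mukai vector $(2,H+2D,\pm1)$ is isotropic, i.e. $(H+2D)^2=\pm 4$ (with the same sign). Moreover the correspondence is given by $h_1=H+2D$: an $h_1$ with the first set of properties can be written as $h_1=H+2D$ with $D\in N(X)$, and for any $D\in N(X)$ with $(H+2D)^2=\pm4$ the element $h_1=H+2D$ has the first set of properties.
   Context: $N(X)$ is the Picard lattice of the K3 surface $X$; it is an even lattice. $[H,h_1]_{\mathrm{pr}}$ denotes the primitive sublattice of $N(X)$ generated by $H$ and $h_1$, i.e. $N(X)\cap(\mathbb{Q}H+\mathbb{Q}h_1)$, and $H\cdot[H,h_1]_{\mathrm{pr}}$ denotes the set $\{H\cdot x: x\in [H,h_1]_{\mathrm{pr}}\}\subseteq\mathbb{Z}$. A Mukai vector $(r,c_1,s)$ is isotropic when $c_1^2=2rs$. *)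

theory Defs
  imports "HOL-Analysis.Analysis"
begin

text \<open>A lattice of rank CARD('n) is modelled as int^'n with the bilinear form
  given by an integer Gram matrix G.\<close>

definition bform :: "int^'n^'n \<Rightarrow> int^'n \<Rightarrow> int^'n \<Rightarrow> int" where
  "bform G x y = (\<Sum>i\<in>UNIV. \<Sum>j\<in>UNIV. x$i * G$i$j * y$j)"

definition even_lattice :: "int^'n^'n \<Rightarrow> bool" where
  "even_lattice G \<longleftrightarrow> (\<forall>i j. G$i$j = G$j$i) \<and> (\<forall>x. even (bform G x x))"

definition nondegenerate :: "int^'n^'n \<Rightarrow> bool" where
  "nondegenerate G \<longleftrightarrow> (\<forall>x. (\<forall>y. bform G x y = 0) \<longrightarrow> x = 0)"

text \<open>Hyperbolic: signature (1, rank-1).\<close>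
definition hyperbolic :: "int^'n^'n \<Rightarrow> bool" where
  "hyperbolic G \<longleftrightarrow> (\<exists>v. bform G v v > 0 \<and>
      (\<forall>w. bform G v w = 0 \<and> w \<noteq> 0 \<longrightarrow> bform G w w < 0))"

definition picard_lattice :: "int^'n^'n \<Rightarrow> bool" where
  "picard_lattice G \<longleftrightarrow> even_lattice G \<and> nondegenerate G \<and> hyperbolic G"

definition primitive_elt :: "int^'n \<Rightarrow> bool" where
  "primitive_elt x \<longleftrightarrow> x \<noteq> 0 \<and> (\<forall>(m::int) y. x = m *s y \<longrightarrow> m = 1 \<or> m = -1)"

text \<open>[H,h]_pr = N \<inter> (Q H + Q h).\<close>
definition prim_span :: "int^'n \<Rightarrow> int^'n \<Rightarrow> (int^'n) set" where
  "prim_span H h = {x. \<exists>p q :: rat. \<forall>i. of_int (x$i) = p * of_int (H$i) + q * of_int (h$i)}"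

end

theory Submission
  imports Defs
begin

lemma bf_add_l: "bform G (x+y) z = bform G x z + bform G y z"
  by (simp add: bform_def algebra_simps sum.distrib)
lemma bf_add_r: "bform G z (x+y) = bform G z x + bform G z y"
  by (simp add: bform_def algebra_simps sum.distrib)
lemma bf_smult_l: "bform G (c *s x) y = c * bform G x y"
  by (simp add: bform_def algebra_simps sum_distrib_left)
lemma bf_smult_r: "bform G y (c *s x) = c * bform G y x"
  by (simp add: bform_def algebra_simps sum_distrib_left)
lemma bf_sym: assumes "\<forall>i j. G$i$j = G$j$i" shows "bform G x y = bform G y x"
  unfolding bform_def
  apply (subst sum.swap)
  using assms by (simp add: algebra_simps)

lemma odd8: fixes o' :: int assumes "odd o'" shows "\<exists>m n. m * o' + n * 8 = 1"
proof -
  have "coprime o' 2" using assms by simp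
  hence "coprime o' ((2::int)^3)" by (simp only: coprime_power_right_iff) simp
  hence "gcd o' 8 = 1" by simp
  thus ?thesis using bezout_int[of o' 8] by metis
qed

lemma rat_common:
  fixes p q :: rat
  assumes "\<forall>i. of_int ((x::int^'n)$i) = p * of_int (H$i) + q * of_int (h1$i)"
  shows "\<exists>d::nat. d > 0 \<and> (\<exists>a b::int. \<forall>i. int d * x$i = a*H$i + b*h1$i)"
proof -
  obtain a1 b1 where qp: "quotient_of p = (a1,b1)" by (cases "quotient_of p") auto
  obtain a2 b2 where qq: "quotient_of q = (a2,b2)" by (cases "quotient_of q") auto
  have pe: "p = of_int a1 / of_int b1" and b1: "b1 > 0"
    using qp quotient_of_div quotient_of_denom_pos by blast+
  have qe: "q = of_int a2 / of_int b2" and b2: "b2 > 0"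
    using qq quotient_of_div quotient_of_denom_pos by blast+
  have "\<forall>i. (b1*b2) * x$i = (a1*b2)*H$i + (a2*b1)*h1$i"
  proof
    fix i
    have "(of_int ((b1*b2) * x$i) :: rat) = of_int (b1*b2) * (p * of_int (H$i) + q * of_int (h1$i))"
      using assms by simp
    also have "\<dots> = of_int ((a1*b2)*H$i + (a2*b1)*h1$i)"
      using b1 b2 by (simp add: pe qe field_simps)
    finally show "(b1*b2) * x$i = (a1*b2)*H$i + (a2*b1)*h1$i" by (simp only: of_int_eq_iff)
  qed
  moreover have "int (nat (b1*b2)) = b1*b2" using b1 b2 by simp
  moreover have "nat (b1*b2) > 0" using b1 b2 by simp
  ultimately show ?thesis by metis
qed


theorem lemma3p2:
  fixes G :: "int^'n^'n" and H :: "int^'n" and \<epsilon> :: int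
  assumes "picard_lattice G"
    and "primitive_elt H"
    and "bform G H H = 8"
    and "\<epsilon> = 1 \<or> \<epsilon> = -1"
  shows "((\<exists>h1. bform G h1 h1 = 4 * \<epsilon> \<and> even (bform G H h1)
                 \<and> (\<lambda>x. bform G H x) ` prim_span H h1 = UNIV)
          \<longleftrightarrow> (\<exists>D. bform G (H + 2 *s D) (H + 2 *s D) = 4 * \<epsilon>))
       \<and> (\<forall>h1. bform G h1 h1 = 4 * \<epsilon> \<and> even (bform G H h1)
                 \<and> (\<lambda>x. bform G H x) ` prim_span H h1 = UNIV
               \<longrightarrow> (\<exists>D. h1 = H + 2 *s D))
       \<and> (\<forall>D. bform G (H + 2 *s D) (H + 2 *s D) = 4 * \<epsilon>
               \<longrightarrow> (let h1 = H + 2 *s D in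
                     bform G h1 h1 = 4 * \<epsilon> \<and> even (bform G H h1)
                     \<and> (\<lambda>x. bform G H x) ` prim_span H h1 = UNIV))"
proof -
  have sym: "\<forall>i j. G$i$j = G$j$i" and ev: "\<And>x. even (bform G x x)"
    using assms(1) unfolding picard_lattice_def even_lattice_def by auto
  have oe: "odd \<epsilon>" using assms(4) by auto
  have P3: "bform G h1 h1 = 4 * \<epsilon> \<and> even (bform G H h1)
                     \<and> (\<lambda>x. bform G H x) ` prim_span H h1 = UNIV"
    if h1: "h1 = H + 2 *s D" and eq: "bform G (H + 2 *s D) (H + 2 *s D) = 4 * \<epsilon>" for D h1
  proof -
    have "bform G (H + 2 *s D) (H + 2 *s D) = 8 + 4 * bform G H D + 4 * bform G D D"
      using assms(3) bf_sym[OF sym, of D H]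
      by (simp add: bf_add_l bf_add_r bf_smult_l bf_smult_r)
    hence "\<epsilon> = 2 + bform G H D + bform G D D" using eq by simp
    hence oHD: "odd (bform G H D)" using oe ev[of D] by auto
    have HH1: "bform G H h1 = 8 + 2 * bform G H D"
      using h1 assms(3) by (simp add: bf_add_r bf_smult_r)
    have img: "(\<lambda>x. bform G H x) ` prim_span H h1 = UNIV"
    proof (rule set_eqI, rule iffI)
      fix t :: int
      obtain m n where mn: "m * bform G H D + n * 8 = 1" using odd8[OF oHD] by blast
      define x where "x = (t*m) *s D + (t*n) *s H"
      have "bform G H x = t * (m * bform G H D + n * 8)"
        using assms(3) by (simp add: x_def bf_add_r bf_smult_r algebra_simps)
      hence bx: "bform G H x = t" using mn by simp
      have "x \<in> prim_span H h1"
        unfolding prim_span_def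
      proof (intro CollectI exI allI)
        fix i
        show "rat_of_int (x $ i) = (of_int (t*n) - of_int (t*m) / 2) * rat_of_int (H $ i)
               + (of_int (t*m) / 2) * rat_of_int (h1 $ i)"
          by (simp add: x_def h1 field_simps)
      qed
      thus "t \<in> (\<lambda>x. bform G H x) ` prim_span H h1" using bx by (metis image_eqI)
    qed simp
    show ?thesis using eq h1 HH1 img by simp
  qed
  have P2: "\<exists>D. h1 = H + 2 *s D"
    if c: "bform G h1 h1 = 4 * \<epsilon>" "even (bform G H h1)"
          "(\<lambda>x. bform G H x) ` prim_span H h1 = UNIV" for h1
  proof -
    have "(1::int) \<in> (\<lambda>x. bform G H x) ` prim_span H h1" using c(3) by simp
    then obtain x where xs: "x \<in> prim_span H h1" and hx: "bform G H x = 1" by auto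
    then obtain p q :: rat where pq: "\<forall>i. of_int (x$i) = p * of_int (H$i) + q * of_int (h1$i)"
      unfolding prim_span_def by auto
    define S where "S = {d::nat. d > 0 \<and> (\<exists>a b::int. \<forall>i. int d * x$i = a*H$i + b*h1$i)}"
    have "\<exists>d. d \<in> S" using rat_common[OF pq] unfolding S_def by auto
    define d where "d = (LEAST d. d \<in> S)"
    have dS: "d \<in> S" unfolding d_def using \<open>\<exists>d. d \<in> S\<close> by (metis LeastI_ex)
    then obtain a b where d0: "d > 0" and ab: "\<forall>i. int d * x$i = a*H$i + b*h1$i"
      unfolding S_def by auto
    have veq: "int d *s x = a *s H + b *s h1" using ab by (simp add: vec_eq_iff)
    have "bform G H (int d *s x) = bform G H (a *s H + b *s h1)" using veq by simp
    hence "int d = a * 8 + b * bform G H h1" using hx assms(3)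
      by (simp add: bf_add_r bf_smult_r)
    hence ed: "even (int d)" using c(2) by simp
    have nboth: "\<not> (even a \<and> even b)"
    proof
      assume "even a \<and> even b"
      then obtain a' b' where a': "a = 2*a'" and b': "b = 2*b'" by (meson evenE)
      obtain d' where d': "d = 2*d'" using ed by (metis evenE even_of_nat)
      have "\<forall>i. int d' * x$i = a'*H$i + b'*h1$i"
      proof
        fix i have "2 * (int d' * x$i) = 2 * (a'*H$i + b'*h1$i)"
          using ab d' a' b' by (simp add: algebra_simps)
        thus "int d' * x$i = a'*H$i + b'*h1$i" by simp
      qed
      hence "d' \<in> S" unfolding S_def using d0 d' by auto
      hence "d \<le> d'" unfolding d_def by (rule Least_le)
      thus False using d' d0 by simp
    qed
    have evc: "\<forall>i. even (a*H$i + b*h1$i)"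
    proof
      fix i show "even (a*H$i + b*h1$i)" using ab ed by (metis dvd_mult2)
    qed
    show ?thesis
    proof (cases "even b")
      case True
      hence oa: "odd a" using nboth by auto
      have "\<forall>i. even (H$i)" using evc oa True by auto
      hence "H = 2 *s (\<chi> i. H$i div 2)" by (simp add: vec_eq_iff)
      hence "(2::int) = 1 \<or> (2::int) = -1" using assms(2) unfolding primitive_elt_def by blast
      thus ?thesis by simp
    next
      case False
      note ob = False
      show ?thesis
      proof (cases "even a")
        case True
        have "\<forall>i. even (h1$i)" using evc ob True by auto
        hence hz: "h1 = 2 *s (\<chi> i. h1$i div 2)" (is "_ = 2 *s ?z") by (simp add: vec_eq_iff)
        have "bform G h1 h1 = 4 * bform G ?z ?z"
          by (subst (1 2) hz) (simp add: bf_smult_l bf_smult_r)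
        hence "bform G ?z ?z = \<epsilon>" using c(1) by simp
        thus ?thesis using ev[of ?z] oe by simp
      next
        case False
        have "\<forall>i. even (h1$i - H$i)" using evc ob False by auto
        hence "h1 = H + 2 *s (\<chi> i. (h1$i - H$i) div 2)" by (simp add: vec_eq_iff)
        thus ?thesis by blast
      qed
    qed
  qed
  show ?thesis
  proof (intro conjI allI impI)
    show "(\<exists>h1. bform G h1 h1 = 4 * \<epsilon> \<and> even (bform G H h1)
                 \<and> (\<lambda>x. bform G H x) ` prim_span H h1 = UNIV)
          \<longleftrightarrow> (\<exists>D. bform G (H + 2 *s D) (H + 2 *s D) = 4 * \<epsilon>)"
    proof
      assume "\<exists>h1. bform G h1 h1 = 4 * \<epsilon> \<and> even (bform G H h1)
                 \<and> (\<lambda>x. bform G H x) ` prim_span H h1 = UNIV"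
      then obtain h1 where "bform G h1 h1 = 4 * \<epsilon>" "even (bform G H h1)"
                 "(\<lambda>x. bform G H x) ` prim_span H h1 = UNIV" by blast
      moreover from P2[OF this] obtain D where "h1 = H + 2 *s D" by blast
      ultimately show "\<exists>D. bform G (H + 2 *s D) (H + 2 *s D) = 4 * \<epsilon>" by blast
    next
      assume "\<exists>D. bform G (H + 2 *s D) (H + 2 *s D) = 4 * \<epsilon>"
      then obtain D where "bform G (H + 2 *s D) (H + 2 *s D) = 4 * \<epsilon>" by blast
      from P3[OF refl this] show "\<exists>h1. bform G h1 h1 = 4 * \<epsilon> \<and> even (bform G H h1)
                 \<and> (\<lambda>x. bform G H x) ` prim_span H h1 = UNIV" by blast
    qed
  next
    fix h1 assume "bform G h1 h1 = 4 * \<epsilon> \<and> even (bform G H h1)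
                 \<and> (\<lambda>x. bform G H x) ` prim_span H h1 = UNIV"
    thus "\<exists>D. h1 = H + 2 *s D" using P2 by blast
  next
    fix D assume "bform G (H + 2 *s D) (H + 2 *s D) = 4 * \<epsilon>"
    thus "let h1 = H + 2 *s D in bform G h1 h1 = 4 * \<epsilon> \<and> even (bform G H h1)
                     \<and> (\<lambda>x. bform G H x) ` prim_span H h1 = UNIV"
      using P3[OF refl] by (simp add: Let_def)
  qed
qed

end
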